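(* Assume $\sum_{i=1}^M b_i\ge 1$ and let $\mathbf r^\star=\mathbf r^\star(\epsilon)$ be the energy-adequate solution defined in the context. Then, with $M$, $(w_i)$, $(b_i)$ fixed, as $\epsilon\to0^+$, $$\big|\bar\Delta(\mathbf r^\star)-\bar\Delta_{\mathrm{opt}}(\epsilon)\big|\le 2\sqrt{\epsilon}\,C_1+o(\sqrt{\epsilon}),\qquad C_1=\sum_{i=1}^M\frac{w_i}{\min\{b_i,\beta^\star\sqrt{w_i}\}},$$ i.e. there is a function $h$ with $h(\epsilon)/\sqrt\epsilon\to0$ as $\epsilon\to 0^+$ such that the gap is at most $2\sqrt\epsilon C_1+h(\epsilon)$ for all $\epsilon>0$.
   Context: Fix an integer $M\ge1$, weights $w_1,\dots,w_M>0$, constants $b_1,\dots,b_M>0$, and $\epsilon>0$ (interpreted as the ratio of carrier-sensing time to mean packet transmission time). For $\mathbf r=(r_1,\dots,r_M)\in(0,\infty)^M$ write $S(\mathbf r)=\sum_{i=1}^M r_i$ and define $$\bar\Delta(\mathbf r)=\sum_{l=1}^M \frac{w_l e^{-r_l\epsilon}}{r_l}\, e^{\epsilon S(\mathbf r)}\big(1+S(\mathbf r)\big)+\sum_{l=1}^M w_l,\qquad \sigma_l(\mathbf r)=\frac{(1-e^{-r_l\epsilon})S(\mathbf r)+r_le^{-r_l\epsilon}}{S(\mathbf r)+1}.$$ Problem 1: minimize $\bar\Delta(\mathbf r)$ over $\mathbf r\in(0,\infty)^M$ subject to $\sigma_l(\mathbf r)\le b_l$ for all $l$. Its optimal (infimum)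 value is denoted $\bar\Delta_{\mathrm{opt}}(\epsilon)$. Energy-adequate solution (when $\sum_i b_i\ge1$): let $\beta^\star\in[0,\max_l b_l/\sqrt{w_l}]$ be the root of $\sum_{i=1}^M\min\{b_i,\beta^\star\sqrt{w_i}\}=1$, let $x^\star=-\tfrac12+\sqrt{\tfrac14+\tfrac1\epsilon}$, and set $r^\star_l=\min\{b_l,\beta^\star\sqrt{w_l}\}\,x^\star$ for $l=1,\dots,M$. *)

theory Defs
  imports "HOL-Analysis.Analysis"
begin

text \<open>Vectors r in (0,inf)^M are functions nat => real, with components indexed by {1..M}.\<close>

definition Ssum :: "nat \<Rightarrow> (nat \<Rightarrow> real) \<Rightarrow> real" where
  "Ssum M r = (\<Sum>i\<in>{1..M}. r i)"

definition DeltaBar :: "nat \<Rightarrow> (nat \<Rightarrow> real) \<Rightarrow> real \<Rightarrow> (nat \<Rightarrow> real) \<Rightarrow> real" where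
  "DeltaBar M w eps r =
     (\<Sum>l\<in>{1..M}. w l * exp (- r l * eps) / r l) * exp (eps * Ssum M r) * (1 + Ssum M r)
     + (\<Sum>l\<in>{1..M}. w l)"

definition sigma :: "nat \<Rightarrow> real \<Rightarrow> (nat \<Rightarrow> real) \<Rightarrow> nat \<Rightarrow> real" where
  "sigma M eps r l =
     ((1 - exp (- r l * eps)) * Ssum M r + r l * exp (- r l * eps)) / (Ssum M r + 1)"

definition feasible :: "nat \<Rightarrow> (nat \<Rightarrow> real) \<Rightarrow> real \<Rightarrow> (nat \<Rightarrow> real) \<Rightarrow> bool" where
  "feasible M b eps r \<longleftrightarrow> (\<forall>l\<in>{1..M}. 0 < r l \<and> sigma M eps r l \<le> b l)"

definition DeltaOpt :: "nat \<Rightarrow> (nat \<Rightarrow> real) \<Rightarrow> (nat \<Rightarrow> real) \<Rightarrow> real \<Rightarrow> real" where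
  "DeltaOpt M w b eps = Inf {DeltaBar M w eps r | r. feasible M b eps r}"

definition xstar :: "real \<Rightarrow> real" where
  "xstar eps = - 1/2 + sqrt (1/4 + 1/eps)"

definition rstar :: "(nat \<Rightarrow> real) \<Rightarrow> (nat \<Rightarrow> real) \<Rightarrow> real \<Rightarrow> real \<Rightarrow> nat \<Rightarrow> real" where
  "rstar w b beta eps l = min (b l) (beta * sqrt (w l)) * xstar eps"

end

theory Submission
  imports Defs "HOL-Real_Asymp.Real_Asymp"
begin

lemma xstar_pos: "eps > 0 \<Longrightarrow> xstar eps > 0"
proof -
  assume e: "eps > 0"
  have "sqrt (1/4) < sqrt (1/4 + 1/eps)" using e by (intro real_sqrt_less_mono) simp
  moreover have "sqrt (1/4::real) = 1/2" by (simp add: real_sqrt_divide)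
  ultimately show ?thesis unfolding xstar_def by simp
qed

lemma xstar_eq: "eps > 0 \<Longrightarrow> xstar eps * (1 + xstar eps) * eps = 1"
proof -
  assume e: "eps > 0"
  define s where "s = sqrt (1/4 + 1/eps)"
  have s2: "s^2 = 1/4 + 1/eps" unfolding s_def using e by simp
  have "xstar eps * (1 + xstar eps) = s^2 - 1/4" unfolding xstar_def s_def[symmetric]
    by (simp add: algebra_simps power2_eq_square)
  then show ?thesis using s2 e by (simp add: field_simps)
qed

lemma asym_l: "eventually (\<lambda>e. exp ((1-a) * (e * xstar e)) * (1 + 1 / xstar e) - 1 \<le> 2 * sqrt e) (at_right (0::real))"
  if a: "a > 0" for a :: real
proof -
  have lim: "((\<lambda>e. (exp ((1-a) * (e * (-1/2 + sqrt(1/4+1/e)))) * (1 + 1/(-1/2 + sqrt(1/4+1/e))) - 1) / sqrt e) \<longlongrightarrow> 2 - a) (at_right (0::real))"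
    by real_asymp
  have "eventually (\<lambda>e. (exp ((1-a) * (e * (-1/2 + sqrt(1/4+1/e)))) * (1 + 1/(-1/2 + sqrt(1/4+1/e))) - 1) / sqrt e < 2) (at_right (0::real))"
    using order_tendstoD(2)[OF lim] a by simp
  moreover have "eventually (\<lambda>e::real. e > 0) (at_right 0)" by (simp add: eventually_at_right_less)
  ultimately show ?thesis
  proof eventually_elim
    case (elim e)
    then have "sqrt e > 0" by simp
    with elim show ?case unfolding xstar_def by (simp add: divide_less_eq)
  qed
qed

lemma sum_ge_each:
  fixes r :: "nat \<Rightarrow> real"
  assumes "\<forall>i\<in>A. r i > 0" "finite A" "l \<in> A"
  shows "r l \<le> sum r A"
  using assms by (intro member_le_sum) auto

theorem theorem1:
  fixes M :: nat and w b :: "nat \<Rightarrow> real" and beta :: real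
  assumes M: "M \<ge> 1"
    and w: "\<forall>i\<in>{1..M}. w i > 0"
    and b: "\<forall>i\<in>{1..M}. b i > 0"
    and bsum: "(\<Sum>i\<in>{1..M}. b i) \<ge> 1"
    and beta_range: "0 \<le> beta" "beta \<le> Max ((\<lambda>l. b l / sqrt (w l)) ` {1..M})"
    and beta_root: "(\<Sum>i\<in>{1..M}. min (b i) (beta * sqrt (w i))) = 1"
  shows "\<exists>h :: real \<Rightarrow> real.
           ((\<lambda>e. h e / sqrt e) \<longlongrightarrow> 0) (at_right 0) \<and>
           (\<forall>eps>0. \<bar>DeltaBar M w eps (rstar w b beta eps) - DeltaOpt M w b eps\<bar>
              \<le> 2 * sqrt eps * (\<Sum>i\<in>{1..M}. w i / min (b i) (beta * sqrt (w i))) + h eps)"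
proof -
  define a where "a i = min (b i) (beta * sqrt (w i))" for i
  define I where "I = {1..M}"
  define W where "W = (\<Sum>l\<in>I. w l)"
  define C1 where "C1 = (\<Sum>i\<in>I. w i / a i)"
  have finI: "finite I" unfolding I_def by simp
  have asum: "(\<Sum>i\<in>I. a i) = 1" using beta_root unfolding a_def I_def by simp
  have beta_pos: "beta > 0"
  proof (rule ccontr)
    assume "\<not> beta > 0"
    then have "beta = 0" using beta_range by simp
    then have "(\<Sum>i\<in>I. a i) = 0" unfolding a_def I_def
      by (intro sum.neutral) (use b in auto)
    with asum show False by simp
  qed
  have apos: "a i > 0" if "i \<in> I" for i
    using that b w beta_pos unfolding a_def I_def by auto
  have ale: "a i \<le> b i" "a i \<le> beta * sqrt (w i)" for i unfolding a_def by auto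
  have aor: "a i = b i \<or> a i = beta * sqrt (w i)" for i unfolding a_def by auto
  have ale1: "a i \<le> 1" if "i \<in> I" for i
    using member_le_sum[of i I a] that apos finI asum by (simp add: less_imp_le)
  have lower: "W + C1 \<le> DeltaBar M w eps r" if e: "eps > 0" and f: "feasible M b eps r" for eps r
  proof -
    define S where "S = Ssum M r"
    have rpos: "\<forall>i\<in>I. r i > 0" using f unfolding feasible_def I_def by auto
    have sig: "sigma M eps r l \<le> b l" if "l \<in> I" for l using f that unfolding feasible_def I_def by auto
    have SI: "S = (\<Sum>i\<in>I. r i)" unfolding S_def Ssum_def I_def by simp
    have rleS: "r l \<le> S" if "l \<in> I" for l using sum_ge_each[OF rpos finI that] SI by simp
    have Spos: "S > 0"
    proof -
      have "1 \<in> I" using M unfolding I_def by simp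
      then show ?thesis using rleS[of 1] rpos by fastforce
    qed
    define y where "y l = r l / (S + 1)" for l
    have ypos: "y l > 0" if "l \<in> I" for l using rpos that Spos unfolding y_def by auto
    have yle: "y l \<le> a l" if "l \<in> I \<and> a l = b l" for l
    proof -
      let ?E = "exp (- r l * eps)"
      have "?E \<le> 1" using rpos that e by auto
      then have "(1 - ?E) * (S - r l) \<ge> 0" using rleS that by auto
      then have "r l \<le> (1 - ?E) * S + r l * ?E" by (simp add: algebra_simps)
      then have "r l / (S+1) \<le> sigma M eps r l" unfolding sigma_def S_def[symmetric]
        using Spos by (intro divide_right_mono) auto
      then show ?thesis using sig[of l] that unfolding y_def by simp
    qed
    have ysum: "(\<Sum>l\<in>I. y l) \<le> 1"
    proof -
      have "(\<Sum>l\<in>I. y l) = S / (S+1)" unfolding y_def SI by (simp add: sum_divide_distrib)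
      also have "\<dots> \<le> 1" using Spos by simp
      finally show ?thesis .
    qed
    have tang: "w l / y l \<ge> w l / a l - (y l - a l) / beta^2" if l: "l \<in> I" for l
    proof -
      have wl: "w l > 0" using w l unfolding I_def by auto
      have al: "a l > 0" using apos l by auto
      have yl: "y l > 0" using ypos l by auto
      have t1: "w l / y l \<ge> w l / a l - w l / (a l)^2 * (y l - a l)"
      proof -
        have "w l * (y l - a l)^2 / ((a l)^2 * y l) \<ge> 0" using wl al yl by auto
        moreover have "w l / y l - (w l / a l - w l / (a l)^2 * (y l - a l)) = w l * (y l - a l)^2 / ((a l)^2 * y l)"
          using al yl by (simp add: field_simps power2_eq_square)
        ultimately show ?thesis by linarith
      qed
      have t2: "w l / (a l)^2 * (y l - a l) \<le> (y l - a l) / beta^2"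
      proof (cases "a l = beta * sqrt (w l)")
        case True
        then have "(a l)^2 = beta^2 * w l" using wl by (simp add: power_mult_distrib)
        then have "w l / (a l)^2 = 1 / beta^2" using wl beta_pos by (simp add: field_simps)
        then show ?thesis by simp
      next
        case False
        then have ab: "a l = b l" using aor by metis
        have "y l - a l \<le> 0" using yle[of l] l ab by auto
        moreover have "(a l)^2 \<le> beta^2 * w l"
        proof -
          have "(a l)^2 \<le> (beta * sqrt (w l))^2" using ale(2)[of l] al by (intro power_mono) auto
          then show ?thesis using wl by (simp add: power_mult_distrib)
        qed
        then have "1 / beta^2 \<le> w l / (a l)^2" using beta_pos al by (simp add: field_simps)
        ultimately have "w l / (a l)^2 * (y l - a l) \<le> 1 / beta^2 * (y l - a l)"
          by (intro mult_right_mono_neg) auto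
        then show ?thesis by simp
      qed
      from t1 t2 show ?thesis by linarith
    qed
    have "C1 - (\<Sum>l\<in>I. (y l - a l) / beta^2) \<le> (\<Sum>l\<in>I. w l / y l)"
      unfolding C1_def sum_subtractf[symmetric] by (intro sum_mono tang)
    moreover have "(\<Sum>l\<in>I. (y l - a l) / beta^2) \<le> 0"
    proof -
      have "(\<Sum>l\<in>I. (y l - a l) / beta^2) = ((\<Sum>l\<in>I. y l) - (\<Sum>l\<in>I. a l)) / beta^2"
        using sum_divide_distrib[of "\<lambda>l. y l - a l" I "beta^2", symmetric] sum_subtractf[of y a I] by simp
      then show ?thesis using ysum asum beta_pos by (simp add: divide_nonpos_pos)
    qed
    ultimately have c1: "C1 \<le> (\<Sum>l\<in>I. w l / y l)" by linarith
    have "(\<Sum>l\<in>I. w l / y l) \<le> (\<Sum>l\<in>I. w l * exp (- r l * eps) / r l) * exp (eps * S) * (1 + S)"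
      unfolding sum_distrib_right
    proof (rule sum_mono)
      fix l assume l: "l \<in> I"
      have wl: "w l > 0" using w l unfolding I_def by auto
      have rl: "r l > 0" using rpos l by auto
      have "exp (- r l * eps) * exp (eps * S) = exp (eps * (S - r l))"
        by (simp add: exp_add[symmetric] algebra_simps)
      moreover have "exp (eps * (S - r l)) \<ge> 1" using rleS[OF l] e by simp
      ultimately have ge: "exp (- r l * eps) * exp (eps * S) \<ge> 1" by simp
      have "w l / y l = w l * (1 + S) / r l" unfolding y_def using Spos rl by (simp add: field_simps)
      also have "\<dots> \<le> w l * (1 + S) / r l * (exp (- r l * eps) * exp (eps * S))"
        using mult_left_mono[OF ge, of "w l * (1 + S) / r l"] wl rl Spos by simp
      also have "\<dots> = w l * exp (- r l * eps) / r l * exp (eps * S) * (1 + S)" by simp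
      finally show "w l / y l \<le> w l * exp (- r l * eps) / r l * exp (eps * S) * (1 + S)" .
    qed
    with c1 show ?thesis unfolding DeltaBar_def W_def S_def I_def by simp
  qed
  have rs: "rstar w b beta eps = (\<lambda>l. a l * xstar eps)" for eps
    unfolding rstar_def a_def by auto
  have Srs: "Ssum M (rstar w b beta eps) = xstar eps" for eps
    unfolding Ssum_def rs I_def[symmetric] using asum by (simp add: sum_distrib_right[symmetric])
  have feas: "feasible M b eps (rstar w b beta eps)" if e: "eps > 0" for eps
    unfolding feasible_def
  proof
    fix l assume l': "l \<in> {1..M}"
    then have l: "l \<in> I" unfolding I_def .
    define x where "x = xstar eps"
    have x: "x > 0" using xstar_pos[OF e] x_def by simp
    have xe: "x * (1 + x) * eps = 1" using xstar_eq[OF e] x_def by simp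
    have al: "a l > 0" "a l \<le> 1" using apos[OF l] ale1[OF l] by auto
    let ?E = "exp (- (a l * x) * eps)"
    have "1 - ?E \<le> a l * x * eps"
      using exp_ge_add_one_self[of "- (a l * x) * eps"] by simp
    then have "x * (1 - a l) * (1 - ?E) \<le> x * (1 - a l) * (a l * x * eps)"
      using al x by (intro mult_left_mono) auto
    also have "\<dots> \<le> a l * (x * x * eps)"
    proof -
      have "x * (1 - a l) * (a l * x * eps) = (1 - a l) * (a l * (x * x * eps))" by simp
      also have "\<dots> \<le> 1 * (a l * (x * x * eps))" using al x e by (intro mult_right_mono) auto
      finally show ?thesis by simp
    qed
    also have "\<dots> \<le> a l * 1"
    proof -
      have "eps * x > 0" using x e by simp
      then have "x * x * eps \<le> 1" using xe by (simp add: algebra_simps)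
      then show ?thesis using al by (intro mult_left_mono) auto
    qed
    finally have k: "x * (1 - a l) * (1 - ?E) \<le> a l" by simp
    have "sigma M eps (rstar w b beta eps) l = ((1 - ?E) * x + a l * x * ?E) / (x + 1)"
      unfolding sigma_def Srs x_def[symmetric] by (simp add: rs x_def)
    also have "\<dots> \<le> a l"
    proof -
      have "(1 - ?E) * x + a l * x * ?E \<le> a l * (x + 1)" using k by (simp add: algebra_simps)
      then show ?thesis using x by (simp add: divide_le_eq)
    qed
    also have "\<dots> \<le> b l" using ale(1) .
    finally show "0 < rstar w b beta eps l \<and> sigma M eps (rstar w b beta eps) l \<le> b l"
      using al x by (simp add: rs x_def)
  qed
  define gap where "gap eps = DeltaBar M w eps (rstar w b beta eps) - DeltaOpt M w b eps" for eps
  define U where "U eps = (\<Sum>l\<in>I. w l / a l * (exp ((1 - a l) * (eps * xstar eps)) * (1 + 1 / xstar eps) - 1))" for eps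
  have gapb: "0 \<le> gap eps \<and> gap eps \<le> U eps" if e: "eps > 0" for eps
  proof -
    let ?A = "{DeltaBar M w eps r | r. feasible M b eps r}"
    have mem: "DeltaBar M w eps (rstar w b beta eps) \<in> ?A" using feas[OF e] by blast
    have bdd: "bdd_below ?A" unfolding bdd_below_def using lower[OF e] by blast
    have o1: "DeltaOpt M w b eps \<le> DeltaBar M w eps (rstar w b beta eps)"
      unfolding DeltaOpt_def by (rule cInf_lower[OF mem bdd])
    have o2: "W + C1 \<le> DeltaOpt M w b eps"
      unfolding DeltaOpt_def using mem lower[OF e] by (intro cInf_greatest) auto
    define x where "x = xstar eps"
    have x: "x > 0" using xstar_pos[OF e] x_def by simp
    have "DeltaBar M w eps (rstar w b beta eps) = (\<Sum>l\<in>I. w l / a l * (exp ((1 - a l) * (eps * x)) * (1 + 1 / x))) + W"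
      unfolding DeltaBar_def Srs x_def[symmetric] W_def I_def[symmetric] sum_distrib_right
    proof (intro arg_cong2[where f="(+)"] refl sum.cong)
      fix l assume l: "l \<in> I"
      have al: "a l > 0" using apos[OF l] .
      have "exp (- rstar w b beta eps l * eps) * exp (eps * x) = exp ((1 - a l) * (eps * x))"
        by (simp add: rs x_def exp_add[symmetric] algebra_simps)
      then show "w l * exp (- rstar w b beta eps l * eps) / rstar w b beta eps l * exp (eps * x) * (1 + x)
          = w l / a l * (exp ((1 - a l) * (eps * x)) * (1 + 1 / x))"
        using al x by (simp add: rs x_def[symmetric] field_simps)
    qed
    also have "\<dots> = U eps + W + C1"
      unfolding U_def C1_def x_def by (simp add: algebra_simps sum.distrib sum_subtractf)
    finally show ?thesis using o1 o2 unfolding gap_def by linarith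
  qed
  have ev: "eventually (\<lambda>e. U e \<le> 2 * sqrt e * C1) (at_right 0)"
  proof -
    have "eventually (\<lambda>e. \<forall>l\<in>I. exp ((1 - a l) * (e * xstar e)) * (1 + 1 / xstar e) - 1 \<le> 2 * sqrt e) (at_right (0::real))"
      using finI by (intro eventually_ball_finite ballI asym_l apos) auto
    then show ?thesis
    proof eventually_elim
      case (elim e)
      have "U e \<le> (\<Sum>l\<in>I. w l / a l * (2 * sqrt e))" unfolding U_def
      proof (intro sum_mono mult_left_mono)
        fix l assume l: "l \<in> I"
        show "exp ((1 - a l) * (e * xstar e)) * (1 + 1 / xstar e) - 1 \<le> 2 * sqrt e" using elim l by auto
        show "0 \<le> w l / a l" using w apos[OF l] l unfolding I_def by (auto intro: less_imp_le)
      qed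
      also have "\<dots> = 2 * sqrt e * C1" unfolding C1_def by (simp add: sum_distrib_left sum_distrib_right algebra_simps)
      finally show ?case .
    qed
  qed
  define h where "h e = max 0 (\<bar>gap e\<bar> - 2 * sqrt e * C1)" for e
  have "((\<lambda>e. h e / sqrt e) \<longlongrightarrow> 0) (at_right 0)"
  proof (rule tendsto_eventually)
    have "eventually (\<lambda>e::real. e > 0) (at_right 0)" by (simp add: eventually_at_right_less)
    with ev show "eventually (\<lambda>e. h e / sqrt e = 0) (at_right 0)"
    proof eventually_elim
      case (elim e)
      then have "h e = 0" unfolding h_def using gapb[of e] by auto
      then show ?case by simp
    qed
  qed
  moreover have "\<forall>eps>0. \<bar>gap eps\<bar> \<le> 2 * sqrt eps * C1 + h eps" unfolding h_def by auto
  ultimately show ?thesis unfolding gap_def C1_def a_def I_def by blast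
qed

end
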